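(* Let $r \geq 3$ be an integer. There is a constant $C = C(r)$ such that every $K_r$-free graph $G$ on $n$ vertices, with $n$ sufficiently large, satisfies $\chi(G) \leq C \left(\frac{n}{\log n}\right)^{(r-2)/(r-1)}$.
   Context: $K_r$-free means containing no (not necessarily induced) copy of $K_r$; $\log$ is the natural logarithm. *)

theory Defs
  imports Complex_Main
begin

definition simple_graph :: "nat set \<Rightarrow> (nat \<Rightarrow> nat \<Rightarrow> bool) \<Rightarrow> bool" where
  "simple_graph V E \<longleftrightarrow> finite V \<and> (\<forall>u v. E u v \<longrightarrow> u \<in> V \<and> v \<in> V)
     \<and> (\<forall>u v. E u v \<longrightarrow> E v u) \<and> (\<forall>v. \<not> E v v)"

definition has_clique :: "nat set \<Rightarrow> (nat \<Rightarrow> nat \<Rightarrow> bool) \<Rightarrow> nat \<Rightarrow> bool" where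
  "has_clique V E r \<longleftrightarrow> (\<exists>S. S \<subseteq> V \<and> card S = r \<and> (\<forall>u\<in>S. \<forall>v\<in>S. u \<noteq> v \<longrightarrow> E u v))"

definition Kr_free :: "nat set \<Rightarrow> (nat \<Rightarrow> nat \<Rightarrow> bool) \<Rightarrow> nat \<Rightarrow> bool" where
  "Kr_free V E r \<longleftrightarrow> \<not> has_clique V E r"

definition colorable :: "nat set \<Rightarrow> (nat \<Rightarrow> nat \<Rightarrow> bool) \<Rightarrow> nat \<Rightarrow> bool" where
  "colorable V E k \<longleftrightarrow> (\<exists>c :: nat \<Rightarrow> nat. (\<forall>v\<in>V. c v < k) \<and> (\<forall>u\<in>V. \<forall>v\<in>V. E u v \<longrightarrow> c u \<noteq> c v))"

definition chromatic_number :: "nat set \<Rightarrow> (nat \<Rightarrow> nat \<Rightarrow> bool) \<Rightarrow> nat" where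
  "chromatic_number V E = (LEAST k. colorable V E k)"

end

theory Submission
  imports Defs
begin

definition hd' :: "real \<Rightarrow> real" where "hd' y = (1 - ln y) / y^2"

lemma hd'_deriv: "y > 0 \<Longrightarrow> (hd' has_real_derivative (2 * ln y - 3) / y^3) (at y)"
  unfolding hd'_def
  apply (rule derivative_eq_intros refl | simp)+
  apply (simp add: field_simps eval_nat_numeral)
  done

lemma h_deriv: "y > 0 \<Longrightarrow> ((\<lambda>y. ln y / y) has_real_derivative hd' y) (at y)"
  unfolding hd'_def
  apply (rule derivative_eq_intros refl | simp)+
  apply (simp add: field_simps power2_eq_square)
  done

lemma hd'_mono:
  assumes "exp 2 \<le> y" "y \<le> z" shows "hd' y \<le> hd' z"
proof (rule DERIV_nonneg_imp_nondecreasing[OF assms(2)])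
  fix x assume x: "y \<le> x" "x \<le> z"
  have xp: "x > 0" using x assms(1) exp_gt_zero[of 2] by linarith
  have "ln x \<ge> 2" using x assms(1) xp by (metis exp_le_cancel_iff exp_ln order.trans)
  hence "(2 * ln x - 3) / x^3 \<ge> 0" using xp by simp
  thus "\<exists>d. DERIV hd' x :> d \<and> d \<ge> 0" using hd'_deriv[OF xp] by blast
qed

lemma h_tangent:
  assumes "exp 2 \<le> y0" "exp 2 \<le> y1"
  shows "ln y1 / y1 \<ge> ln y0 / y0 + hd' y0 * (y1 - y0)"
proof -
  have pos: "\<And>x::real. exp 2 \<le> x \<Longrightarrow> x > 0" using exp_gt_zero[of 2] by linarith
  consider "y1 = y0" | "y0 < y1" | "y1 < y0" by linarith
  then show ?thesis
  proof cases
    case 1 then show ?thesis by simp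
  next
    case 2
    have "\<exists>z. y0 < z \<and> z < y1 \<and> ln y1 / y1 - ln y0 / y0 = (y1 - y0) * hd' z"
    proof (rule MVT2[OF 2])
      fix x assume "y0 \<le> x" "x \<le> y1"
      hence "x > 0" using pos assms(1) by smt
      thus "DERIV (\<lambda>y. ln y / y) x :> hd' x" by (rule h_deriv)
    qed
    then obtain z where z: "y0 < z" "z < y1" "ln y1 / y1 - ln y0 / y0 = (y1 - y0) * hd' z" by blast
    have "hd' y0 \<le> hd' z" using hd'_mono[OF assms(1)] z by (simp add: less_imp_le)
    hence "(y1 - y0) * hd' y0 \<le> (y1 - y0) * hd' z" using 2 by (intro mult_left_mono) (auto simp: less_imp_le)
    hence "hd' y0 * (y1 - y0) \<le> (y1 - y0) * hd' z" by (simp only: mult.commute)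
    then show ?thesis using z(3) by linarith
  next
    case 3
    have "\<exists>z. y1 < z \<and> z < y0 \<and> ln y0 / y0 - ln y1 / y1 = (y0 - y1) * hd' z"
    proof (rule MVT2[OF 3])
      fix x assume "y1 \<le> x" "x \<le> y0"
      hence "x > 0" using pos assms(2) by smt
      thus "DERIV (\<lambda>y. ln y / y) x :> hd' x" by (rule h_deriv)
    qed
    then obtain z where z: "y1 < z" "z < y0" "ln y0 / y0 - ln y1 / y1 = (y0 - y1) * hd' z" by blast
    have "exp 2 \<le> z" using z assms by linarith
    hence "hd' z \<le> hd' y0" using hd'_mono z by simp
    hence "(y0 - y1) * hd' z \<le> (y0 - y1) * hd' y0" using 3 by (intro mult_left_mono) (auto simp: less_imp_le)
    moreover have "(y0 - y1) * hd' y0 = - (hd' y0 * (y1 - y0))" by (simp add: algebra_simps)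
    ultimately show ?thesis using z(3) by linarith
  qed
qed

definition KK :: real where "KK = exp 2"
definition cc :: real where "cc = 1/20"
definition gg :: "real \<Rightarrow> real \<Rightarrow> real" where
  "gg b d = cc * ln (KK + d / b) / (b * KK + d)"
definition ss :: "real \<Rightarrow> real \<Rightarrow> real" where
  "ss b d = cc * (1 - ln (KK + d / b)) / (b * KK + d)^2"

lemma KK_le: "KK \<le> 9"
proof -
  have "exp (2::real) = exp 1 * exp 1" by (simp flip: exp_add)
  also have "\<dots> \<le> 3 * 3" using exp_le by (intro mult_mono) auto
  finally show ?thesis by (simp add: KK_def)
qed

lemma KK_ge: "KK \<ge> 1"
  unfolding KK_def by simp

lemma ln_ge2: "KK \<le> y \<Longrightarrow> ln y \<ge> 2"
  unfolding KK_def by (metis exp_gt_zero exp_le_cancel_iff exp_ln less_le_trans order.trans order_refl)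

lemma gg_alt: assumes "b \<ge> 1" "d \<ge> 0"
  shows "gg b d = (cc / b) * (ln (KK + d/b) / (KK + d/b))"
proof -
  have "b * KK + d = b * (KK + d/b)" using assms by (simp add: field_simps)
  thus ?thesis unfolding gg_def using assms by simp
qed

lemma ss_alt: assumes "b \<ge> 1" "d \<ge> 0"
  shows "ss b d = (cc / b^2) * hd' (KK + d/b)"
proof -
  have "b * KK + d = b * (KK + d/b)" using assms by (simp add: field_simps)
  thus ?thesis unfolding ss_def hd'_def using assms by (simp add: power_mult_distrib)
qed

lemma ss_nonpos: assumes "b \<ge> 1" "d \<ge> 0" shows "ss b d \<le> 0"
proof -
  have "KK \<le> KK + d/b" using assms by simp
  hence "ln (KK + d/b) \<ge> 2" by (rule ln_ge2)
  thus ?thesis unfolding ss_def cc_def by (simp add: divide_nonpos_nonneg)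
qed

lemma gg_tangent: assumes "b \<ge> 1" "d0 \<ge> 0" "d1 \<ge> 0"
  shows "gg b d1 \<ge> gg b d0 + ss b d0 * (d1 - d0)"
proof -
  define y0 where "y0 = KK + d0/b"
  define y1 where "y1 = KK + d1/b"
  have "exp 2 \<le> y0" "exp 2 \<le> y1" using assms by (auto simp: y0_def y1_def KK_def)
  from h_tangent[OF this] have t: "ln y1 / y1 \<ge> ln y0 / y0 + hd' y0 * (y1 - y0)" .
  have cb: "cc / b \<ge> 0" using assms by (simp add: cc_def)
  have "gg b d1 = (cc/b) * (ln y1 / y1)" using gg_alt[OF assms(1,3)] y1_def by simp
  also have "\<dots> \<ge> (cc/b) * (ln y0 / y0 + hd' y0 * (y1 - y0))" using mult_left_mono[OF t cb] .
  also have "(cc/b) * (ln y0 / y0 + hd' y0 * (y1 - y0)) = gg b d0 + ss b d0 * (d1 - d0)"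
    using gg_alt[OF assms(1,2)] ss_alt[OF assms(1,2)] assms(1) unfolding y0_def y1_def
    by (simp add: field_simps power2_eq_square)
  finally show ?thesis by linarith
qed

lemma gg_ode: assumes b: "b \<ge> 1" and d: "d \<ge> 0"
  shows "(d + 1) * gg b d \<le> 1 + (- ss b d) * (d^2 - b * d)"
proof -
  define Y where "Y = b * KK + d"
  define y where "y = KK + d / b"
  have Yy: "Y = b * y" using b unfolding Y_def y_def by (simp add: field_simps)
  have yK: "y \<ge> KK" using b d by (simp add: y_def)
  have ly: "ln y \<ge> 2" using ln_ge2[OF yK] .
  have bK: "b * KK \<ge> 1" using mult_mono[OF b KK_ge] b by simp
  have Ypos: "Y > 0" using bK d unfolding Y_def by linarith
  have ypos: "y > 0" using yK KK_ge by linarith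
  have "d + 1 \<le> Y" using bK unfolding Y_def by linarith
  hence A: "(d + 1) * gg b d \<le> cc * ln y"
  proof -
    have "(d + 1) * gg b d = (cc * ln y) * ((d + 1) / Y)" unfolding gg_def Y_def y_def by simp
    also have "\<dots> \<le> (cc * ln y) * 1"
      using \<open>d + 1 \<le> Y\<close> Ypos ly d by (intro mult_left_mono) (auto simp: cc_def)
    finally show ?thesis by simp
  qed
  have B: "d^2 - b * d \<ge> Y^2 - (2*KK+1) * b * Y"
  proof -
    have "d^2 - b * d - (Y^2 - (2*KK+1) * b * Y) = b^2 * KK^2 + b^2 * KK"
      unfolding Y_def by (simp add: algebra_simps power2_eq_square)
    moreover have "b^2 * KK^2 + b^2 * KK \<ge> 0" using KK_ge by simp
    ultimately show ?thesis by linarith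
  qed
  have mss: "- ss b d = cc * (ln y - 1) / Y^2" unfolding ss_def Y_def y_def by (simp add: minus_divide_left algebra_simps)
  have cl: "cc * (ln y - 1) / Y^2 \<ge> 0" using ly by (simp add: cc_def)
  have C: "(- ss b d) * (d^2 - b * d) \<ge> cc * (ln y - 1) * (1 - (2*KK+1) / y)"
  proof -
    have "(- ss b d) * (d^2 - b * d) \<ge> (cc * (ln y - 1) / Y^2) * (Y^2 - (2*KK+1) * b * Y)"
      unfolding mss using mult_left_mono[OF B cl] .
    also have "(cc * (ln y - 1) / Y^2) * (Y^2 - (2*KK+1) * b * Y) = cc * (ln y - 1) * (1 - (2*KK+1) / y)"
      using Ypos ypos b unfolding Yy by (simp add: field_simps power2_eq_square)
    finally show ?thesis .
  qed
  have "ln y \<le> y - 1" using ln_le_minus_one ypos by blast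
  hence "(ln y - 1) / y \<le> 1" using ypos by (simp add: divide_le_eq)
  hence "(2*KK+1) * ((ln y - 1) / y) \<le> (2*KK+1) * 1" using KK_ge by (intro mult_left_mono) auto
  moreover have "(2*KK+1) * 1 \<le> 19" using KK_le by simp
  ultimately have "(2*KK+1) * ((ln y - 1) / y) \<le> 19" by (rule order_trans)
  hence D0: "cc * ((2*KK+1) * ((ln y - 1) / y)) \<le> cc * 19"
    by (intro mult_left_mono) (auto simp: cc_def)
  have eqD: "cc * (ln y - 1) * ((2*KK+1) / y) = cc * ((2*KK+1) * ((ln y - 1) / y))"
    by (simp add: algebra_simps add_divide_distrib diff_divide_distrib)
  have D: "cc * (ln y - 1) * ((2*KK+1) / y) \<le> cc * 19" unfolding eqD by (rule D0)
  have "cc * (ln y - 1) * (1 - (2*KK+1) / y) = cc * ln y - cc - cc * (ln y - 1) * ((2*KK+1) / y)"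
    by (simp add: algebra_simps)
  with A C D show ?thesis using cc_def by linarith
qed


definition nb :: "(nat \<Rightarrow> nat \<Rightarrow> bool) \<Rightarrow> nat \<Rightarrow> nat set" where "nb E v = {u. E v u}"
definition deg :: "(nat \<Rightarrow> nat \<Rightarrow> bool) \<Rightarrow> nat \<Rightarrow> nat" where "deg E v = card (nb E v)"
definition indep :: "nat set \<Rightarrow> (nat \<Rightarrow> nat \<Rightarrow> bool) \<Rightarrow> nat set \<Rightarrow> bool" where
  "indep V E S \<longleftrightarrow> S \<subseteq> V \<and> (\<forall>u\<in>S. \<forall>w\<in>S. \<not> E u w)"
definition rest :: "(nat \<Rightarrow> nat \<Rightarrow> bool) \<Rightarrow> nat set \<Rightarrow> nat \<Rightarrow> nat \<Rightarrow> bool" where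
  "rest E W = (\<lambda>u w. E u w \<and> u \<in> W \<and> w \<in> W)"
definition mm :: "nat set \<Rightarrow> (nat \<Rightarrow> nat \<Rightarrow> bool) \<Rightarrow> nat" where
  "mm V E = (\<Sum>v\<in>V. deg E v)"

lemma sg_nb_sub: "simple_graph V E \<Longrightarrow> nb E v \<subseteq> V"
  unfolding simple_graph_def nb_def by auto
lemma sg_fin: "simple_graph V E \<Longrightarrow> finite V"
  unfolding simple_graph_def by auto
lemma sg_fin_nb: "simple_graph V E \<Longrightarrow> finite (nb E v)"
  using sg_nb_sub sg_fin finite_subset by metis
lemma sg_not_self: "simple_graph V E \<Longrightarrow> v \<notin> nb E v"
  unfolding simple_graph_def nb_def by auto
lemma sg_sym: "simple_graph V E \<Longrightarrow> E u v \<Longrightarrow> E v u"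
  unfolding simple_graph_def by auto
lemma sg_in: "simple_graph V E \<Longrightarrow> E u v \<Longrightarrow> u \<in> V \<and> v \<in> V"
  unfolding simple_graph_def by auto

lemma sg_rest: "simple_graph V E \<Longrightarrow> W \<subseteq> V \<Longrightarrow> simple_graph W (rest E W)"
  unfolding simple_graph_def rest_def using finite_subset by blast

lemma nb_rest: "nb (rest E W) u \<subseteq> nb E u"
  unfolding nb_def rest_def by auto

lemma mm_arcs: "simple_graph V E \<Longrightarrow> mm V E = card (Sigma V (nb E))"
  unfolding mm_def deg_def using sg_fin sg_fin_nb by simp

lemma indep_rest:
  assumes sg: "simple_graph V E" and v: "v \<in> V"
    and W: "W = V - insert v (nb E v)" and S: "indep W (rest E W) S"
  shows "indep V E (insert v S)"
proof -
  have SW: "S \<subseteq> W" using S unfolding indep_def by auto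
  have "\<forall>u\<in>S. \<forall>w\<in>S. \<not> E u w" using S SW unfolding indep_def rest_def by blast
  moreover have "\<forall>u\<in>S. \<not> E v u \<and> \<not> E u v" using SW W sg_sym[OF sg] unfolding nb_def by blast
  moreover have "\<not> E v v" using sg unfolding simple_graph_def by auto
  ultimately show ?thesis using SW W v unfolding indep_def by blast
qed

lemma card_W:
  assumes sg: "simple_graph V E" and v: "v \<in> V" and W: "W = V - insert v (nb E v)"
  shows "card W = card V - 1 - deg E v" "card W + 1 + deg E v = card V"
proof -
  have sub: "insert v (nb E v) \<subseteq> V" using sg_nb_sub[OF sg] v by auto
  have c: "card (insert v (nb E v)) = 1 + deg E v"
    using sg_fin_nb[OF sg] sg_not_self[OF sg] unfolding deg_def by simp
  have "card W = card V - card (insert v (nb E v))"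
    unfolding W using card_Diff_subset[OF finite_subset[OF sub sg_fin[OF sg]] sub] .
  moreover have "card (insert v (nb E v)) \<le> card V" using card_mono[OF sg_fin[OF sg] sub] .
  ultimately show "card W = card V - 1 - deg E v" "card W + 1 + deg E v = card V" using c by auto
qed

lemma mm_rest:
  assumes sg: "simple_graph V E" and v: "v \<in> V" and W: "W = V - insert v (nb E v)"
    and cod: "\<forall>u w. E u w \<longrightarrow> real (card (nb E u \<inter> nb E w)) \<le> a"
  shows "real (mm W (rest E W)) \<le> real (mm V E) - 2 * (\<Sum>u\<in>nb E v. real (deg E u)) + a * real (deg E v)"
proof -
  have fV: "finite V" using sg_fin[OF sg] .
  define A where "A = Sigma V (nb E)"
  define P1 where "P1 = Sigma (nb E v) (nb E)"
  define P2 where "P2 = prod.swap ` P1"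
  have fA: "finite A" unfolding A_def using fV sg_fin_nb[OF sg] by auto
  have P1A: "P1 \<subseteq> A" unfolding P1_def A_def using sg_nb_sub[OF sg] by auto
  have P2A: "P2 \<subseteq> A" unfolding P2_def P1_def A_def using sg_in[OF sg] sg_sym[OF sg]
    by (auto simp: nb_def)
  have fP1: "finite P1" using finite_subset[OF P1A fA] .
  have fP2: "finite P2" using finite_subset[OF P2A fA] .
  have cP1: "card P1 = (\<Sum>u\<in>nb E v. deg E u)" unfolding P1_def deg_def
    using sg_fin_nb[OF sg] by simp
  have cP2: "card P2 = card P1" unfolding P2_def by (rule card_image) (auto simp: inj_on_def)
  have I: "P1 \<inter> P2 = Sigma (nb E v) (\<lambda>u. nb E u \<inter> nb E v)"
    unfolding P1_def P2_def using sg_sym[OF sg] by (auto simp: nb_def image_iff)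
  have cI: "real (card (P1 \<inter> P2)) \<le> a * real (deg E v)"
  proof -
    have "card (P1 \<inter> P2) = (\<Sum>u\<in>nb E v. card (nb E u \<inter> nb E v))"
      unfolding I using sg_fin_nb[OF sg] by simp
    hence "real (card (P1 \<inter> P2)) = (\<Sum>u\<in>nb E v. real (card (nb E u \<inter> nb E v)))" by simp
    also have "\<dots> \<le> (\<Sum>u\<in>nb E v. a)"
    proof (rule sum_mono)
      fix u assume "u \<in> nb E v"
      hence "E u v" using sg_sym[OF sg] by (auto simp: nb_def)
      thus "real (card (nb E u \<inter> nb E v)) \<le> a" using cod by blast
    qed
    also have "\<dots> = a * real (deg E v)" by (simp add: deg_def)
    finally show ?thesis .
  qed
  have cU: "card (P1 \<union> P2) + card (P1 \<inter> P2) = card P1 + card P2"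
    using card_Un_Int[OF fP1 fP2] by simp
  have sub: "Sigma W (nb (rest E W)) \<subseteq> A - (P1 \<union> P2)"
    unfolding A_def P1_def P2_def W rest_def nb_def using sg_sym[OF sg] by (auto simp: image_iff)
  have "mm W (rest E W) = card (Sigma W (nb (rest E W)))"
    by (rule mm_arcs[OF sg_rest[OF sg]]) (auto simp: W)
  also have "\<dots> \<le> card (A - (P1 \<union> P2))" using card_mono[OF _ sub] fA by simp
  also have "\<dots> = card A - card (P1 \<union> P2)" using card_Diff_subset[of "P1 \<union> P2" A] fP1 fP2 P1A P2A by auto
  finally have le: "mm W (rest E W) \<le> card A - card (P1 \<union> P2)" .
  have "card (P1 \<union> P2) \<le> card A" using card_mono[OF fA] P1A P2A by auto
  hence "real (mm W (rest E W)) \<le> real (card A) - real (card (P1 \<union> P2))" using le by linarith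
  moreover have "real (card A) = real (mm V E)" using mm_arcs[OF sg] A_def by simp
  moreover have "real (card P1) = (\<Sum>u\<in>nb E v. real (deg E u))" using cP1 by simp
  ultimately show ?thesis using cU cP2 cI by linarith
qed

lemma sum_S:
  assumes sg: "simple_graph V E"
  shows "(\<Sum>v\<in>V. \<Sum>u\<in>nb E v. real (deg E u)) = (\<Sum>u\<in>V. real (deg E u)^2)"
proof -
  have fV: "finite V" using sg_fin[OF sg] .
  have nbV: "\<And>v. nb E v = {u \<in> V. E v u}" using sg_in[OF sg] by (auto simp: nb_def)
  have "(\<Sum>v\<in>V. \<Sum>u\<in>nb E v. real (deg E u)) = (\<Sum>v\<in>V. \<Sum>u\<in>{u \<in> V. E v u}. real (deg E u))"
    using nbV by simp
  also have "\<dots> = (\<Sum>u\<in>V. \<Sum>v\<in>{v \<in> V. E v u}. real (deg E u))"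
    by (rule sum.swap_restrict[OF fV fV])
  also have "\<dots> = (\<Sum>u\<in>V. real (deg E u)^2)"
  proof (rule sum.cong[OF refl])
    fix u assume "u \<in> V"
    have "{v \<in> V. E v u} = nb E u" using nbV sg_sym[OF sg] by auto
    thus "(\<Sum>v\<in>{v \<in> V. E v u}. real (deg E u)) = real (deg E u)^2"
      by (simp add: deg_def power2_eq_square)
  qed
  finally show ?thesis .
qed

lemma cauchy_sq:
  fixes f :: "'a \<Rightarrow> real"
  assumes "finite A" "A \<noteq> {}"
  shows "(sum f A)^2 / real (card A) \<le> (\<Sum>x\<in>A. (f x)^2)"
proof -
  define n where "n = real (card A)"
  define mu where "mu = sum f A / n"
  have n: "n > 0" using assms by (simp add: n_def card_gt_0_iff)
  have "0 \<le> (\<Sum>x\<in>A. (f x - mu)^2)" by (simp add: sum_nonneg)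
  also have "\<dots> = (\<Sum>x\<in>A. (f x)^2 - 2 * mu * f x + mu^2)"
    by (rule sum.cong) (auto simp: power2_diff mult.commute mult.left_commute)
  also have "\<dots> = (\<Sum>x\<in>A. (f x)^2) - (\<Sum>x\<in>A. 2 * mu * f x) + (\<Sum>x\<in>A. mu^2)"
    by (simp add: sum.distrib sum_subtractf)
  also have "\<dots> = (\<Sum>x\<in>A. (f x)^2) - 2 * mu * sum f A + n * mu^2"
    by (simp add: sum_distrib_left n_def)
  also have "\<dots> = (\<Sum>x\<in>A. (f x)^2) - (sum f A)^2 / n"
    using n by (simp add: mu_def field_simps power2_eq_square)
  finally show ?thesis by (simp add: n_def)
qed


lemma gg_tan_mult:
  assumes nv: "nv \<ge> 0" and x: "x \<ge> 0" and z: "nv = 0 \<Longrightarrow> x = 0" and b: "b \<ge> 1" and d: "d \<ge> 0"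
  shows "nv * gg b (x / nv) \<ge> nv * gg b d + ss b d * (x - nv * d)"
proof (cases "nv = 0")
  case True then show ?thesis using z by simp
next
  case False
  hence np: "nv > 0" using nv by simp
  have "gg b (x / nv) \<ge> gg b d + ss b d * (x / nv - d)"
    using gg_tangent[OF b d] x np by simp
  hence "nv * gg b (x / nv) \<ge> nv * (gg b d + ss b d * (x / nv - d))"
    using np by (intro mult_left_mono) auto
  also have "nv * (gg b d + ss b d * (x / nv - d)) = nv * gg b d + ss b d * (x - nv * d)"
    using np by (simp add: field_simps)
  finally show ?thesis by linarith
qed

lemma shearer:
  fixes a :: real assumes a: "a \<ge> 0"
  shows "simple_graph V E \<Longrightarrow> \<forall>u w. E u w \<longrightarrow> real (card (nb E u \<inter> nb E w)) \<le> a \<Longrightarrow>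
    \<exists>S. indep V E S \<and> real (card V) * gg (a+1) (real (mm V E) / real (card V)) \<le> real (card S)"
proof (induction "card V" arbitrary: V E rule: less_induct)
  case less
  note sg = less.prems(1) and cod = less.prems(2)
  have fV: "finite V" using sg_fin[OF sg] .
  show ?case
  proof (cases "V = {}")
    case True then show ?thesis by (intro exI[of _ "{}"]) (auto simp: indep_def)
  next
    case False
    define n where "n = real (card V)"
    define m where "m = real (mm V E)"
    define d where "d = m / n"
    define b where "b = a + 1"
    define G where "G = gg b d"
    define s where "s = ss b d"
    define dv where "dv = (\<lambda>v. real (deg E v))"
    define Sv where "Sv = (\<lambda>v. \<Sum>u\<in>nb E v. real (deg E u))"
    define Q where "Q = (\<lambda>v. 1 + (n - 1 - dv v) * G + s * (m - 2 * Sv v + a * dv v - (n - 1 - dv v) * d))"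
    have n: "n > 0" using False fV by (simp add: n_def card_gt_0_iff)
    have b: "b \<ge> 1" using a by (simp add: b_def)
    have d: "d \<ge> 0" by (simp add: d_def m_def n_def)
    have s: "s \<le> 0" using ss_nonpos[OF b d] by (simp add: s_def)
    have mnd: "m = n * d" using n by (simp add: d_def)
    have sumdv: "(\<Sum>v\<in>V. dv v) = m" by (simp add: dv_def m_def mm_def)
    have sumSv: "(\<Sum>v\<in>V. Sv v) = (\<Sum>v\<in>V. (dv v)^2)" using sum_S[OF sg] by (simp add: Sv_def dv_def)
    have CS: "m^2 / n \<le> (\<Sum>v\<in>V. (dv v)^2)"
      using cauchy_sq[OF fV False, of dv] sumdv by (simp add: n_def)
    define c0 where "c0 = 1 + (n-1)*G + s*(m - (n-1)*d)"
    define c1 where "c1 = -G + s*a + s*d"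
    define c2 where "c2 = -2*s"
    have Qlin: "\<And>v. Q v = c0 + c1 * dv v + c2 * Sv v"
      by (simp add: Q_def c0_def c1_def c2_def algebra_simps)
    have "(\<Sum>v\<in>V. Q v) = (\<Sum>v\<in>V. c0) + (\<Sum>v\<in>V. c1 * dv v) + (\<Sum>v\<in>V. c2 * Sv v)"
      unfolding Qlin by (simp only: sum.distrib)
    also have "\<dots> = n * c0 + c1 * m + c2 * (\<Sum>v\<in>V. (dv v)^2)"
      by (simp only: sum_distrib_left[symmetric] sumdv sumSv) (simp add: n_def)
    finally have sumQ: "(\<Sum>v\<in>V. Q v) = n * c0 + c1 * m + (-2*s) * (\<Sum>v\<in>V. (dv v)^2)"
      by (simp add: c2_def)
    have "(-2*s) * (m^2/n) \<le> (-2*s) * (\<Sum>v\<in>V. (dv v)^2)"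
      using s CS by (intro mult_left_mono) auto
    moreover have F2: "m^2/n = n * d^2" using n mnd by (simp add: power2_eq_square)
    ultimately have h1: "(-2*s) * (n * d^2) \<le> (-2*s) * (\<Sum>v\<in>V. (dv v)^2)" by (simp only: F2)
    have "c1 * m = c1 * (n*d)" using mnd by simp
    hence sQ: "(\<Sum>v\<in>V. Q v) \<ge> n * c0 + c1 * (n*d) + (-2*s) * (n*d^2)"
      using sumQ h1 by linarith
    have key: "n * c0 + c1 * (n*d) + (-2*s) * (n*d^2) - n*n*G = n * (1 - (d+1)*G + (-s)*(d^2 - b*d))"
      unfolding c0_def c1_def mnd b_def by (simp add: algebra_simps power2_eq_square)
    have ode: "(d + 1) * G \<le> 1 + (-s) * (d^2 - b*d)" unfolding G_def s_def by (rule gg_ode[OF b d])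
    have "n * (1 - (d+1)*G + (-s)*(d^2 - b*d)) \<ge> 0" using n ode by (intro mult_nonneg_nonneg) auto
    moreover have "(\<Sum>v\<in>V. n * G) = n * (n * G)" by (simp add: n_def)
    ultimately have sumge: "(\<Sum>v\<in>V. Q v) \<ge> (\<Sum>v\<in>V. n * G)" using sQ key by linarith
    have "\<exists>v\<in>V. Q v \<ge> n * G"
    proof (rule ccontr)
      assume "\<not> (\<exists>v\<in>V. Q v \<ge> n * G)"
      hence "\<And>v. v \<in> V \<Longrightarrow> Q v < n * G" by (meson not_le)
      hence "(\<Sum>v\<in>V. Q v) < (\<Sum>v\<in>V. n * G)" by (rule sum_strict_mono[OF fV False])
      thus False using sumge by linarith
    qed
    then obtain v where vV: "v \<in> V" and Qv: "Q v \<ge> n * G" by blast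
    define W where "W = V - insert v (nb E v)"
    have cW: "card W + 1 + deg E v = card V" using card_W[OF sg vV W_def] by simp
    hence lt: "card W < card V" by simp
    have sgW: "simple_graph W (rest E W)" using sg_rest[OF sg] W_def by auto
    have codW: "\<forall>u w. rest E W u w \<longrightarrow> real (card (nb (rest E W) u \<inter> nb (rest E W) w)) \<le> a"
    proof (intro allI impI)
      fix u w assume "rest E W u w"
      hence e: "E u w" by (simp add: rest_def)
      have "nb (rest E W) u \<inter> nb (rest E W) w \<subseteq> nb E u \<inter> nb E w" using nb_rest by blast
      hence "card (nb (rest E W) u \<inter> nb (rest E W) w) \<le> card (nb E u \<inter> nb E w)"
        by (rule card_mono[rotated]) (use sg_fin_nb[OF sg] in auto)
      hence "real (card (nb (rest E W) u \<inter> nb (rest E W) w)) \<le> real (card (nb E u \<inter> nb E w))" by simp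
      moreover have "real (card (nb E u \<inter> nb E w)) \<le> a" using cod e by blast
      ultimately show "real (card (nb (rest E W) u \<inter> nb (rest E W) w)) \<le> a" by linarith
    qed
    obtain S' where S': "indep W (rest E W) S'"
      and S'c: "real (card W) * gg (a+1) (real (mm W (rest E W)) / real (card W)) \<le> real (card S')"
      using less.hyps[OF lt sgW codW] by blast
    define nv where "nv = real (card W)"
    define x where "x = real (mm W (rest E W))"
    have "real (card V) = real (card W) + 1 + real (deg E v)" using arg_cong[OF cW, of real] by simp
    hence nvv: "nv = n - 1 - dv v" by (simp add: nv_def n_def dv_def)
    have xle: "x \<le> m - 2 * Sv v + a * dv v"
      using mm_rest[OF sg vV W_def cod] by (simp add: x_def m_def Sv_def dv_def)
    have z: "nv = 0 \<Longrightarrow> x = 0"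
    proof -
      assume "nv = 0"
      hence "W = {}" using finite_subset[OF _ fV, of W] by (simp add: nv_def W_def)
      thus "x = 0" by (simp add: x_def mm_def)
    qed
    have tan: "nv * gg b (x / nv) \<ge> nv * G + s * (x - nv * d)"
      using gg_tan_mult[OF _ _ z b d] by (simp add: nv_def x_def G_def s_def)
    have "s * (x - nv * d) \<ge> s * (m - 2 * Sv v + a * dv v - nv * d)"
      using s xle by (intro mult_left_mono_neg) auto
    moreover have "Q v = 1 + nv * G + s * (m - 2 * Sv v + a * dv v - nv * d)" by (simp add: Q_def nvv)
    moreover have "nv * gg b (x / nv) \<le> real (card S')" using S'c by (simp add: nv_def x_def b_def)
    ultimately have cS: "real (card S') + 1 \<ge> Q v" using tan by linarith
    have "v \<notin> S'" using S' unfolding indep_def W_def by auto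
    moreover have "finite S'" using S' fV finite_subset[of S' V] unfolding indep_def W_def by blast
    ultimately have "card (insert v S') = card S' + 1" by simp
    hence "real (card (insert v S')) \<ge> n * G" using cS Qv by simp
    moreover have "indep V E (insert v S')" using indep_rest[OF sg vV W_def S'] .
    ultimately show ?thesis by (auto simp: n_def G_def b_def d_def m_def)
  qed
qed


lemma shearer2:
  fixes a D :: real
  assumes a: "a \<ge> 0" and D: "D \<ge> 0" and sg: "simple_graph V E"
    and cod: "\<forall>u w. E u w \<longrightarrow> real (card (nb E u \<inter> nb E w)) \<le> a"
    and deg: "\<forall>v\<in>V. real (deg E v) \<le> D"
  shows "\<exists>S. indep V E S \<and> cc * real (card V) * ln (KK + D / (a+1)) \<le> real (card S) * ((a+1) * KK + D)"
proof -
  obtain S where S: "indep V E S" and Sc: "real (card V) * gg (a+1) (real (mm V E) / real (card V)) \<le> real (card S)"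
    using shearer[OF a sg cod] by blast
  define b where "b = a + 1"
  have b: "b \<ge> 1" using a by (simp add: b_def)
  have Y: "b * KK + D > 0" using b KK_ge D by (smt (verit) mult_ge1_I)
  show ?thesis
  proof (cases "V = {}")
    case True
    have "0 \<le> real (card S) * ((a+1) * KK + D)" using Y by (simp add: b_def)
    then show ?thesis using S True by auto
  next
    case False
    have fV: "finite V" using sg_fin[OF sg] .
    define n where "n = real (card V)"
    have n: "n > 0" using False fV by (simp add: n_def card_gt_0_iff)
    define x where "x = real (mm V E) / n"
    have x0: "x \<ge> 0" by (simp add: x_def n_def)
    have "real (mm V E) = (\<Sum>v\<in>V. real (deg E v))" by (simp add: mm_def)
    also have "\<dots> \<le> (\<Sum>v\<in>V. D)" using deg by (intro sum_mono) auto
    also have "\<dots> = n * D" by (simp add: n_def)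
    finally have "x \<le> D" using n by (simp add: x_def divide_le_eq mult.commute)
    hence "ss b D * (x - D) \<ge> 0" using ss_nonpos[OF b D] by (simp add: mult_nonpos_nonpos)
    hence "gg b x \<ge> gg b D" using gg_tangent[OF b D x0] by linarith
    hence "n * gg b D \<le> real (card S)" using Sc n by (smt (verit) b_def mult_left_mono n_def x_def)
    hence "n * (cc * ln (KK + D / b) / (b * KK + D)) \<le> real (card S)" by (simp add: gg_def)
    hence "cc * n * ln (KK + D / b) / (b * KK + D) \<le> real (card S)" by (simp add: field_simps)
    hence "cc * n * ln (KK + D / b) \<le> real (card S) * (b * KK + D)" using Y by (simp add: divide_le_eq)
    thus ?thesis using S by (auto simp: n_def b_def)
  qed
qed

lemma indep_sub: "W \<subseteq> V \<Longrightarrow> indep W (rest E W) S \<Longrightarrow> indep V E S"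
  unfolding indep_def rest_def by blast

lemma clique_nb:
  assumes sg: "simple_graph V E" and v: "v \<in> V" and H: "has_clique (nb E v) (rest E (nb E v)) k"
  shows "has_clique V E (Suc k)"
proof -
  obtain S where S: "S \<subseteq> nb E v" "card S = k" "\<forall>x\<in>S. \<forall>y\<in>S. x \<noteq> y \<longrightarrow> rest E (nb E v) x y"
    using H unfolding has_clique_def by blast
  have fS: "finite S" using S(1) sg_fin_nb[OF sg] finite_subset by blast
  have vS: "v \<notin> S" using S(1) sg_not_self[OF sg] by blast
  have "insert v S \<subseteq> V" using S(1) sg_nb_sub[OF sg] v by blast
  moreover have "card (insert v S) = Suc k" using fS vS S(2) by simp
  moreover have "\<forall>x\<in>insert v S. \<forall>y\<in>insert v S. x \<noteq> y \<longrightarrow> E x y"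
    using S(1,3) sg_sym[OF sg] unfolding rest_def nb_def by blast
  ultimately show ?thesis unfolding has_clique_def by blast
qed

lemma clique_codeg:
  assumes sg: "simple_graph V E" and e: "E u w"
    and H: "has_clique (nb E u \<inter> nb E w) (rest E (nb E u \<inter> nb E w)) k"
  shows "has_clique V E (Suc (Suc k))"
proof -
  obtain S where S: "S \<subseteq> nb E u \<inter> nb E w" "card S = k"
    "\<forall>x\<in>S. \<forall>y\<in>S. x \<noteq> y \<longrightarrow> rest E (nb E u \<inter> nb E w) x y"
    using H unfolding has_clique_def by blast
  have fS: "finite S" using S(1) sg_fin_nb[OF sg, of u] finite_subset by blast
  have uS: "u \<notin> S" "w \<notin> S" using S(1) sg_not_self[OF sg] by blast+
  have uw: "u \<noteq> w" using e sg unfolding simple_graph_def by auto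
  have "insert u (insert w S) \<subseteq> V" using S(1) sg_nb_sub[OF sg] sg_in[OF sg e] by blast
  moreover have "card (insert u (insert w S)) = Suc (Suc k)" using fS uS uw S(2) by simp
  moreover have "\<forall>x\<in>insert u (insert w S). \<forall>y\<in>insert u (insert w S). x \<noteq> y \<longrightarrow> E x y"
    using S(1,3) sg_sym[OF sg] e unfolding rest_def nb_def by blast
  ultimately show ?thesis unfolding has_clique_def by blast
qed


lemma ln_le_2sqrt: assumes "t \<ge> 1" shows "ln t \<le> 2 * sqrt t"
proof -
  have s: "sqrt t > 0" using assms by simp
  have "ln (sqrt t) \<le> sqrt t - 1" using ln_le_minus_one[OF s] .
  moreover have "ln (sqrt t) = ln t / 2" using assms by (simp add: ln_sqrt)
  ultimately show ?thesis by linarith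
qed

lemma t_over_ln: assumes "t > 1" shows "t / ln t \<ge> sqrt t / 2"
proof -
  have L: "ln t > 0" using assms by simp
  have "sqrt t * ln t \<le> sqrt t * (2 * sqrt t)" using ln_le_2sqrt[of t] assms by (intro mult_left_mono) auto
  also have "\<dots> = 2 * t" using assms by (simp add: mult.left_commute)
  finally have "sqrt t * ln t \<le> 2 * t" .
  thus ?thesis using L by (simp add: field_simps)
qed

lemma sqrt_ge_of_sq: assumes "t \<ge> x^2" "x \<ge> 0" shows "sqrt t \<ge> x"
  using real_le_rsqrt[OF assms(1)] .

lemma sqrt2_ge_of_4: assumes "t \<ge> x^4" "x \<ge> 0" shows "sqrt (sqrt t) \<ge> x"
proof -
  have "t \<ge> (x^2)^2" using assms by (simp add: power_mult[symmetric])
  hence "sqrt t \<ge> x^2" by (rule real_le_rsqrt)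
  thus ?thesis by (rule real_le_rsqrt)
qed

lemma ln_sqrt2: assumes "t > 0" shows "ln (sqrt (sqrt t)) = ln t / 4"
  using assms by (simp add: ln_sqrt)

definition RB :: "nat \<Rightarrow> real \<Rightarrow> real \<Rightarrow> bool" where
  "RB r C T \<longleftrightarrow> (\<forall>t\<ge>T. \<forall>V E. simple_graph V E \<longrightarrow> \<not> has_clique V E r \<longrightarrow>
     (\<forall>S. indep V E S \<longrightarrow> real (card S) < t) \<longrightarrow> real (card V) \<le> C * t^(r-1) / (ln t)^(r-2))"


lemma ln3: "ln (3::real) \<ge> 1"
proof -
  have "exp 1 \<le> (3::real)" by (rule exp_le)
  hence "ln (exp 1) \<le> ln (3::real)" by (subst ln_le_cancel_iff) auto
  thus ?thesis by simp
qed

lemma ramsey_step: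
  assumes R1: "RB (q+2) C1 T1" and R2: "RB (q+1) C2 T2" and C1: "C1 \<ge> 1" and C2: "C2 \<ge> 0"
  shows "\<exists>T\<ge>3. RB (q+3) (160*C1) T"
proof -
  define M where "M = C2 + 1"
  have M: "M \<ge> 1" using C2 by (simp add: M_def)
  define T where "T = max 3 (max T1 (max T2 (max ((2*M/C1)^4) ((2*M*KK/C1)^2))))"
  show ?thesis
  proof (intro exI[of _ T] conjI)
    show "T \<ge> 3" by (simp add: T_def)
    show "RB (q+3) (160*C1) T" unfolding RB_def
    proof (intro allI impI)
      fix t V E
      assume t: "t \<ge> T" and sg: "simple_graph V E" and ncl: "\<not> has_clique V E (q+3)"
        and al: "\<forall>S. indep V E S \<longrightarrow> real (card S) < t"
      define L where "L = ln t"
      have t3: "t \<ge> 3" and tT1: "t \<ge> T1" and tT2: "t \<ge> T2"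
        and tA: "t \<ge> (2*M/C1)^4" and tB: "t \<ge> (2*M*KK/C1)^2" using t by (auto simp: T_def)
      have t1: "t > 1" using t3 by simp
      have L1: "L \<ge> 1" using ln3 t3 unfolding L_def
        by (metis ln_le_cancel_iff order.trans zero_less_numeral less_le_trans)
      have L0: "L > 0" using L1 by simp
      have Lt: "L \<le> t" using ln_le_minus_one[of t] t1 unfolding L_def by simp
      define D where "D = C1 * t^(q+1) / L^q"
      define A where "A = C2 * t^q / L^(q-1)"
      have D0: "D \<ge> 0" using C1 t1 L0 by (simp add: D_def)
      have A0: "A \<ge> 0" using C2 t1 L0 by (simp add: A_def)
      have deg: "\<forall>v\<in>V. real (deg E v) \<le> D"
      proof
        fix v assume v: "v \<in> V"
        define W where "W = nb E v"
        have sgW: "simple_graph W (rest E W)" using sg_rest[OF sg sg_nb_sub[OF sg]] by (simp add: W_def)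
        have nclW: "\<not> has_clique W (rest E W) (q+2)"
          using clique_nb[OF sg v, of "q+2"] ncl by (auto simp: W_def eval_nat_numeral)
        have alW: "\<forall>S. indep W (rest E W) S \<longrightarrow> real (card S) < t"
          using al indep_sub[OF sg_nb_sub[OF sg]] by (auto simp: W_def)
        have "real (card W) \<le> C1 * t^(q+2-1) / (ln t)^(q+2-2)"
          using R1 tT1 sgW nclW alW unfolding RB_def by blast
        thus "real (deg E v) \<le> D" by (simp add: deg_def W_def D_def L_def)
      qed
      have cod: "\<forall>u w. E u w \<longrightarrow> real (card (nb E u \<inter> nb E w)) \<le> A"
      proof (intro allI impI)
        fix u w assume e: "E u w"
        define W where "W = nb E u \<inter> nb E w"
        have Wsub: "W \<subseteq> V" using sg_nb_sub[OF sg] by (auto simp: W_def)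
        have sgW: "simple_graph W (rest E W)" using sg_rest[OF sg Wsub] .
        have nclW: "\<not> has_clique W (rest E W) (q+1)"
          using clique_codeg[OF sg e, of "q+1"] ncl by (auto simp: W_def eval_nat_numeral)
        have alW: "\<forall>S. indep W (rest E W) S \<longrightarrow> real (card S) < t"
          using al indep_sub[OF Wsub] by auto
        have "real (card W) \<le> C2 * t^(q+1-1) / (ln t)^(q+1-2)"
          using R2 tT2 sgW nclW alW unfolding RB_def by blast
        thus "real (card (nb E u \<inter> nb E w)) \<le> A" by (simp add: W_def A_def L_def)
      qed
      obtain S where S: "indep V E S"
        and Sc: "cc * real (card V) * ln (KK + D / (A+1)) \<le> real (card S) * ((A+1) * KK + D)"
        using shearer2[OF A0 D0 sg cod deg] by blast
      define X where "X = t^q * L / L^q"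
      have Lq: "L^q \<le> t^q" using L0 Lt by (intro power_mono) auto
      have Lqp: "L^q > 0" using L0 by simp
      have X1: "1 \<le> X"
      proof -
        have "L^q \<le> t^q * L" using Lq L1 t1
          by (smt (verit) mult_le_cancel_left1 zero_less_power)
        thus ?thesis using Lqp by (simp add: X_def)
      qed
      have AX: "A \<le> C2 * X"
      proof (cases q)
        case 0
        have "C2 * 1 \<le> C2 * L" using C2 L1 by (intro mult_left_mono) auto
        thus ?thesis using 0 by (simp add: A_def X_def)
      next
        case (Suc k)
        have "A = C2 * t^q / L^k" by (simp add: A_def Suc)
        also have "\<dots> = C2 * X" using L0 by (simp add: X_def Suc field_simps)
        finally show ?thesis by simp
      qed
      define B where "B = M * X"
      have AB: "A + 1 \<le> B" using AX X1 by (simp add: B_def M_def algebra_simps)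
      have st: "sqrt t \<ge> 2*M*KK/C1" using sqrt_ge_of_sq[OF tB] M C1 KK_ge by simp
      have MKL: "M * KK * L \<le> C1 * t"
      proof -
        have "M * KK * L \<le> M * KK * (2 * sqrt t)"
          using ln_le_2sqrt[of t] t1 M KK_ge unfolding L_def by (intro mult_left_mono) auto
        also have "\<dots> = (2*M*KK/C1) * (C1 * sqrt t)" using C1 by (simp add: field_simps)
        also have "\<dots> \<le> sqrt t * (C1 * sqrt t)" using st C1 t1 by (intro mult_right_mono) auto
        also have "\<dots> = C1 * t" using t1 by (simp add: mult.left_commute)
        finally show ?thesis .
      qed
      have BD: "B * KK \<le> D"
      proof -
        have "B * KK = (M * KK * L) * (t^q / L^q)" by (simp add: B_def X_def)
        also have "\<dots> \<le> (C1 * t) * (t^q / L^q)" using MKL t1 Lqp by (intro mult_right_mono) auto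
        also have "\<dots> = D" by (simp add: D_def)
        finally show ?thesis .
      qed
      have Bpos: "B > 0" using M X1 by (simp add: B_def)
      have DB: "D / B = (C1 / M) * (t / L)"
        using Lqp L0 M by (simp add: D_def B_def X_def field_simps)
      define s where "s = sqrt (sqrt t)"
      have s0: "s > 0" using t1 by (simp add: s_def)
      have sA: "s \<ge> 2*M/C1" using sqrt2_ge_of_4[OF tA] M C1 by (simp add: s_def)
      have ss: "sqrt t = s * s" using t1 by (simp add: s_def)
      have lnb: "ln (KK + D / (A+1)) \<ge> L / 4"
      proof -
        have "D / B \<le> D / (A+1)" using D0 AB A0 by (intro divide_left_mono) auto
        moreover have "(C1 / M) * (t / L) \<ge> (C1 / M) * (sqrt t / 2)"
          using t_over_ln[OF t1] C1 M unfolding L_def by (intro mult_left_mono) auto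
        moreover have "(C1 / M) * (sqrt t / 2) \<ge> s"
        proof -
          have "(C1 / M) * (sqrt t / 2) = (C1 * s / (2 * M)) * s" by (simp add: ss field_simps)
          moreover have "C1 * s / (2 * M) \<ge> 1" using sA M C1 by (simp add: field_simps)
          moreover have "1 * s \<le> (C1 * s / (2 * M)) * s"
            using \<open>C1 * s / (2 * M) \<ge> 1\<close> s0 by (intro mult_right_mono) auto
          ultimately show ?thesis by simp
        qed
        ultimately have "KK + D / (A+1) \<ge> s" using DB KK_ge by linarith
        hence "ln (KK + D / (A+1)) \<ge> ln s" using s0 by simp
        thus ?thesis using ln_sqrt2 t1 unfolding s_def L_def by simp
      qed
      define n where "n = real (card V)"
      define Y where "Y = (A+1) * KK + D"
      have Y0: "Y \<ge> 0" using A0 KK_ge D0 by (simp add: Y_def)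
      have Y2D: "Y \<le> 2 * D" using AB BD KK_ge by (simp add: Y_def) (smt (verit) mult_right_mono)
      have cS: "real (card S) < t" using al S by blast
      have "cc * n * (L/4) \<le> cc * n * ln (KK + D / (A+1))"
        using lnb by (intro mult_left_mono) (auto simp: cc_def n_def)
      also have "\<dots> \<le> real (card S) * Y" using Sc by (simp add: n_def Y_def)
      also have "\<dots> \<le> t * Y" using cS Y0 by (intro mult_right_mono) auto
      also have "\<dots> \<le> t * (2 * D)" using Y2D t1 by (intro mult_left_mono) auto
      finally have "cc * n * (L/4) \<le> t * (2 * D)" .
      hence "n \<le> 160 * (t * D) / L" using L0 by (simp add: cc_def field_simps)
      also have "160 * (t * D) / L = 160 * C1 * t^(q+2) / L^(q+1)"
        using L0 by (simp add: D_def field_simps)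
      finally show "real (card V) \<le> 160 * C1 * t^(q+3-1) / (ln t)^(q+3-2)"
        by (simp add: n_def L_def numeral_eq_Suc)
    qed
  qed
qed


lemma ramsey_all: "r \<ge> 1 \<Longrightarrow> \<exists>C T. C \<ge> 1 \<and> T \<ge> 3 \<and> RB r C T"
proof (induction r rule: less_induct)
  case (less r)
  have "r = 1 \<or> r = 2 \<or> (\<exists>q. r = q + 3)" using less.prems by presburger
  moreover
  { assume r: "r = 1"
    have "RB r 1 3" unfolding RB_def r
    proof (intro allI impI)
      fix t V E assume t: "t \<ge> (3::real)" and sg: "simple_graph V E" and ncl: "\<not> has_clique V E 1"
      have "V = {}"
      proof (rule ccontr)
        assume "V \<noteq> {}"
        then obtain v where "v \<in> V" by blast
        hence "has_clique V E 1" unfolding has_clique_def by (intro exI[of _ "{v}"]) auto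
        thus False using ncl by simp
      qed
      thus "real (card V) \<le> 1 * t^(1-1) / (ln t)^(1-2)" by simp
    qed
    hence ?case using r by (intro exI[of _ 1] exI[of _ 3]) auto }
  moreover
  { assume r: "r = 2"
    have "RB r 1 3" unfolding RB_def r
    proof (intro allI impI)
      fix t V E assume t: "t \<ge> (3::real)" and sg: "simple_graph V E" and ncl: "\<not> has_clique V E 2"
        and al: "\<forall>S. indep V E S \<longrightarrow> real (card S) < t"
      have "indep V E V"
        unfolding indep_def
      proof (intro conjI ballI subset_refl notI)
        fix u w assume u: "u \<in> V" and w: "w \<in> V" and e: "E u w"
        have uw: "u \<noteq> w" using e sg unfolding simple_graph_def by auto
        have "has_clique V E 2" unfolding has_clique_def
          using u w uw e sg_sym[OF sg e] by (intro exI[of _ "{u,w}"]) auto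
        thus False using ncl by simp
      qed
      hence "real (card V) < t" using al by blast
      thus "real (card V) \<le> 1 * t^(2-1) / (ln t)^(2-2)" by simp
    qed
    hence ?case using r by (intro exI[of _ 1] exI[of _ 3]) auto }
  moreover
  { fix q assume r: "r = q + 3"
    obtain C1 T1 where C1: "C1 \<ge> 1" "RB (q+2) C1 T1" using less.IH[of "q+2"] r by auto
    obtain C2 T2 where C2: "C2 \<ge> 1" "RB (q+1) C2 T2" using less.IH[of "q+1"] r by auto
    obtain T where "T \<ge> 3" "RB (q+3) (160*C1) T" using ramsey_step[OF C1(2) C2(2) C1(1)] C2(1) by auto
    hence ?case using r C1(1) by (intro exI[of _ "160*C1"] exI[of _ T]) auto }
  ultimately show ?case by blast
qed


lemma alpha_lb:
  assumes r: "r \<ge> 3" and RB: "RB r C T" and C: "C \<ge> 1" and T: "T \<ge> 3"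
  shows "\<exists>c>0. \<exists>K0. \<forall>V E. simple_graph V E \<longrightarrow> \<not> has_clique V E r \<longrightarrow> real (card V) \<ge> K0 \<longrightarrow>
    (\<exists>S. indep V E S \<and> real (card S) \<ge> c * real (card V) powr (1 / (real r - 1)) * ln (real (card V)) powr ((real r - 2) / (real r - 1)))"
proof -
  define \<rho> where "\<rho> = r - 1"
  define p where "p = r - 2"
  have \<rho>p: "\<rho> = p + 1" using r by (simp add: \<rho>_def p_def)
  have p1: "p \<ge> 1" using r by (simp add: p_def)
  have rr: "real r - 1 = real \<rho>" "real r - 2 = real p" using r by (auto simp: \<rho>_def p_def of_nat_diff)
  define c where "c = 1 / (2 * C * (2 * real \<rho>)^p)"
  have \<rho>pos: "real \<rho> \<ge> 1" using \<rho>p by simp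
  have cp: "(2 * real \<rho>)^p \<ge> 1" using \<rho>pos by (intro one_le_power) auto
  have c0: "c > 0" using C cp by (simp add: c_def)
  have c1: "c \<le> 1"
  proof -
    define Q where "Q = 2 * C * (2 * real \<rho>)^p"
    have "1 * 1 \<le> (2 * C) * (2 * real \<rho>)^p" using C cp by (intro mult_mono) auto
    hence "1 \<le> Q" by (simp add: Q_def)
    hence "1 / Q \<le> 1" by simp
    thus ?thesis by (simp add: c_def Q_def)
  qed
  define Z where "Z = max T (1/c)"
  have Z3: "Z \<ge> 3" using T by (simp add: Z_def)
  have Zc: "c * Z \<ge> 1"
  proof -
    have "c * (1/c) \<le> c * Z" using c0 by (intro mult_left_mono) (auto simp: Z_def)
    thus ?thesis using c0 by simp
  qed
  define K0 where "K0 = Z^(2*\<rho>)"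
  show ?thesis
  proof (rule exI[of _ c], rule conjI[OF c0], rule exI[of _ K0], intro allI impI)
    fix V E assume sg: "simple_graph V E" and ncl: "\<not> has_clique V E r" and kK: "real (card V) \<ge> K0"
    define k where "k = real (card V)"
    have K0ge: "K0 \<ge> 3"
    proof -
      have "Z^1 \<le> Z^(2*\<rho>)" using Z3 \<rho>pos by (intro power_increasing) auto
      thus ?thesis using Z3 by (simp add: K0_def)
    qed
    have k3: "k \<ge> 3" using kK K0ge by (simp add: k_def)
    have kpos: "k > 0" using k3 by simp
    have lk1: "ln k \<ge> 1" using ln3 k3 by (smt (verit) ln_le_cancel_iff)
    define w where "w = k powr (1 / (2 * real \<rho>))"
    have wZ: "w \<ge> Z"
    proof -
      have "(Z^(2*\<rho>)) powr (1 / (2 * real \<rho>)) \<le> k powr (1 / (2 * real \<rho>))"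
        using kK Z3 by (intro powr_mono2) (auto simp: k_def K0_def)
      moreover have "(Z^(2*\<rho>)) powr (1 / (2 * real \<rho>)) = Z"
      proof -
        have "Z^(2*\<rho>) = Z powr (real (2*\<rho>))" using Z3 by (subst powr_realpow) auto
        hence "(Z^(2*\<rho>)) powr (1 / (2 * real \<rho>)) = Z powr (real (2*\<rho>) * (1 / (2 * real \<rho>)))"
          by (simp add: powr_powr)
        also have "\<dots> = Z" using \<rho>pos Z3 by simp
        finally show ?thesis .
      qed
      ultimately show ?thesis by (simp add: w_def)
    qed
    have w0: "w > 0" using wZ Z3 by simp
    have kg: "k powr (1 / real \<rho>) = w * w"
    proof -
      have "w * w = k powr (1 / (2 * real \<rho>) + 1 / (2 * real \<rho>))" unfolding w_def by (rule powr_add[symmetric])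
      also have "1 / (2 * real \<rho>) + 1 / (2 * real \<rho>) = 1 / real \<rho>" using \<rho>pos by (simp add: field_simps)
      finally show ?thesis by simp
    qed
    define \<beta> where "\<beta> = real p / real \<rho>"
    define t where "t = c * k powr (1 / real \<rho>) * ln k powr \<beta>"
    have lb1: "ln k powr \<beta> \<ge> 1" using lk1 by (intro ge_one_powr_ge_zero) (auto simp: \<beta>_def)
    have tw: "t \<ge> w"
    proof -
      have "w \<le> (c * Z) * w" using Zc w0 by simp
      also have "\<dots> \<le> c * w * w" using wZ c0 w0 by (simp add: mult_right_mono mult_left_mono mult.assoc)
      also have "\<dots> = c * k powr (1 / real \<rho>)" using kg by simp
      also have "\<dots> = c * k powr (1 / real \<rho>) * 1" by simp
      also have "\<dots> \<le> c * k powr (1 / real \<rho>) * ln k powr \<beta>"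
        using c0 by (intro mult_left_mono[OF lb1]) auto
      finally show ?thesis by (simp add: t_def)
    qed
    have tT: "t \<ge> T" using tw wZ by (simp add: Z_def)
    have t0: "t > 0" using tw w0 by simp
    have lnt: "ln t \<ge> ln k / (2 * real \<rho>)"
    proof -
      have "ln w \<le> ln t" using tw w0 by simp
      moreover have "ln w = ln k / (2 * real \<rho>)" using kpos by (simp add: w_def)
      ultimately show ?thesis by simp
    qed
    show "\<exists>S. indep V E S \<and> real (card S) \<ge> c * real (card V) powr (1 / (real r - 1)) * ln (real (card V)) powr ((real r - 2) / (real r - 1))"
    proof (rule ccontr)
      assume "\<not> ?thesis"
      hence al: "\<forall>S. indep V E S \<longrightarrow> real (card S) < t"
        unfolding t_def k_def \<beta>_def rr by (auto simp: not_le)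
      have kle: "k \<le> C * t^\<rho> / (ln t)^p"
        using RB tT sg ncl al unfolding RB_def k_def \<rho>_def p_def by blast
      have tpow: "t^\<rho> = c^\<rho> * k * (ln k)^p"
      proof -
        have "(k powr (1 / real \<rho>))^\<rho> = k powr (real \<rho> * (1 / real \<rho>))"
          using kpos by (simp add: powr_power)
        also have "\<dots> = k" using \<rho>pos kpos by simp
        finally have a: "(k powr (1 / real \<rho>))^\<rho> = k" .
        have "(ln k powr \<beta>)^\<rho> = ln k powr (real \<rho> * \<beta>)" using lk1 by (simp add: powr_power)
        also have "real \<rho> * \<beta> = real p" using \<rho>pos by (simp add: \<beta>_def)
        also have "ln k powr real p = (ln k)^p" using lk1 by (simp add: powr_realpow)
        finally have b: "(ln k powr \<beta>)^\<rho> = (ln k)^p" .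
        show ?thesis unfolding t_def power_mult_distrib a b ..
      qed
      have lkp: "(ln k)^p > 0" using lk1 by simp
      have lnt0: "(ln k)^p / (2 * real \<rho>)^p > 0" using lkp \<rho>pos by simp
      have lntp: "(ln t)^p \<ge> (ln k)^p / (2 * real \<rho>)^p"
      proof -
        have "(ln k / (2 * real \<rho>))^p \<le> (ln t)^p" using lnt lk1 \<rho>pos by (intro power_mono) auto
        thus ?thesis by (simp add: power_divide)
      qed
      have "C * t^\<rho> / (ln t)^p \<le> C * t^\<rho> / ((ln k)^p / (2 * real \<rho>)^p)"
      proof -
        have ltp: "(ln t)^p > 0" using lntp lnt0 by linarith
        show ?thesis using C t0 by (intro divide_left_mono[OF lntp _ mult_pos_pos[OF ltp lnt0]]) auto
      qed
      also have "\<dots> = C * c^\<rho> * (2 * real \<rho>)^p * k" using lkp cp lk1 unfolding tpow by (simp add: field_simps)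
      also have "\<dots> \<le> C * c * (2 * real \<rho>)^p * k"
      proof -
        have "c^\<rho> \<le> c^1" using c0 c1 \<rho>pos by (intro power_decreasing) auto
        thus ?thesis using C cp kpos by (simp add: mult_right_mono mult_left_mono)
      qed
      also have "\<dots> = k / 2" using C cp \<rho>pos by (simp add: c_def field_simps)
      finally show False using kle kpos by linarith
    qed
  qed
qed


lemma greedy_color:
  fixes f :: "nat \<Rightarrow> real"
  assumes fmono: "\<And>i j. 1 \<le> i \<Longrightarrow> i \<le> j \<Longrightarrow> f i \<le> f j" and fpos: "\<And>j. 1 \<le> j \<Longrightarrow> f j > 0"
    and ex: "\<And>W. W \<subseteq> V \<Longrightarrow> W \<noteq> {} \<Longrightarrow> \<exists>S. indep W (rest E W) S \<and> real (card S) \<ge> f (card W)"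
    and fV: "finite V"
  shows "W \<subseteq> V \<Longrightarrow> \<exists>k. colorable W E k \<and> real k \<le> (\<Sum>j=1..card W. 1 / f j)"
proof (induction "card W" arbitrary: W rule: less_induct)
  case less
  show ?case
  proof (cases "W = {}")
    case True
    have "colorable W E 0" using True by (simp add: colorable_def)
    thus ?thesis using True by (intro exI[of _ 0]) auto
  next
    case False
    have fW: "finite W" using less.prems fV finite_subset by blast
    have nW: "card W \<ge> 1" using False fW by (simp add: Suc_le_eq card_gt_0_iff)
    obtain S where S: "indep W (rest E W) S" and Sc: "real (card S) \<ge> f (card W)"
      using ex[OF less.prems False] by blast
    have SW: "S \<subseteq> W" using S by (simp add: indep_def)
    have fS: "finite S" using SW fW finite_subset by blast
    have cS0: "card S > 0" using Sc fpos[OF nW] by linarith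
    define W' where "W' = W - S"
    have cW': "card W' + card S = card W" unfolding W'_def
      using card_Diff_subset[OF fS SW] card_mono[OF fW SW] by simp
    have lt: "card W' < card W" using cW' cS0 by simp
    have W'V: "W' \<subseteq> V" using less.prems by (auto simp: W'_def)
    obtain k' where k': "colorable W' E k'" and k'le: "real k' \<le> (\<Sum>j=1..card W'. 1 / f j)"
      using less.hyps[OF lt W'V] by blast
    obtain col where col: "\<forall>v\<in>W'. col v < k'" "\<forall>u\<in>W'. \<forall>v\<in>W'. E u v \<longrightarrow> col u \<noteq> col v"
      using k' unfolding colorable_def by blast
    define col2 where "col2 = (\<lambda>v. if v \<in> S then k' else col v)"
    have "colorable W E (Suc k')" unfolding colorable_def
    proof (intro exI[of _ col2] conjI ballI impI)
      fix v assume v: "v \<in> W"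
      show "col2 v < Suc k'"
      proof (cases "v \<in> S")
        case False
        hence "v \<in> W'" using v by (simp add: W'_def)
        hence "col v < k'" using col(1) by blast
        thus ?thesis using False by (simp add: col2_def)
      qed (simp add: col2_def)
    next
      fix u v assume u: "u \<in> W" and v: "v \<in> W" and e: "E u v"
      show "col2 u \<noteq> col2 v"
      proof (cases "u \<in> S")
        case True
        hence "v \<notin> S" using S u v e unfolding indep_def rest_def by blast
        thus ?thesis using True col(1) v by (auto simp: col2_def W'_def)
      next
        case False
        show ?thesis
        proof (cases "v \<in> S")
          case True thus ?thesis using False col(1) u by (auto simp: col2_def W'_def)
        next
          case False2: False
          thus ?thesis using False col(2) u v e by (auto simp: col2_def W'_def)
        qed
      qed
    qed
    moreover have "real (Suc k') \<le> (\<Sum>j=1..card W. 1 / f j)"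
    proof -
      have split: "(\<Sum>j=1..card W. 1 / f j) = (\<Sum>j=1..card W'. 1 / f j) + (\<Sum>j=card W' + 1..card W' + card S. 1 / f j)"
        using sum.ub_add_nat[of 1 "card W'" "\<lambda>j. 1 / f j" "card S"] cW' by simp
      have "(\<Sum>j=card W' + 1..card W' + card S. 1 / f j) \<ge> (\<Sum>j=card W' + 1..card W' + card S. 1 / f (card W))"
      proof (rule sum_mono)
        fix j assume j: "j \<in> {card W' + 1..card W' + card S}"
        hence j1: "1 \<le> j" and jW: "j \<le> card W" using cW' by auto
        show "1 / f (card W) \<le> 1 / f j"
          using fmono[OF j1 jW] fpos[OF j1] by (simp add: frac_le)
      qed
      moreover have "(\<Sum>j=card W' + 1..card W' + card S. 1 / f (card W)) = real (card S) / f (card W)"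
        by simp
      moreover have "real (card S) / f (card W) \<ge> 1" using Sc fpos[OF nW] by simp
      ultimately show ?thesis using split k'le by simp
    qed
    ultimately show ?thesis by blast
  qed
qed

lemma chrom_le: "colorable V E k \<Longrightarrow> chromatic_number V E \<le> k"
  unfolding chromatic_number_def by (rule Least_le)

lemma sum_powr_bound:
  fixes g :: real assumes g: "0 \<le> g" "g < 1"
  shows "(\<Sum>j=1..n. real j powr (-g)) \<le> real n powr (1-g) / (1-g)"
proof (induction n)
  case 0 then show ?case by simp
next
  case (Suc n)
  have bpos: "1 - g > 0" using g by simp
  have step: "real n powr (1-g) / (1-g) + real (Suc n) powr (-g) \<le> real (Suc n) powr (1-g) / (1-g)"
  proof (cases "n = 0")
    case True
    have "1 \<le> 1 / (1-g)" using g bpos by (simp add: field_simps)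
    thus ?thesis using True by simp
  next
    case False
    hence n0: "real n > 0" by simp
    have "\<exists>z. real n < z \<and> z < real (Suc n) \<and>
        real (Suc n) powr (1-g) - real n powr (1-g) = (real (Suc n) - real n) * ((1-g) * z powr (1-g-1))"
    proof (rule MVT2)
      show "real n < real (Suc n)" by simp
      fix x assume "real n \<le> x" "x \<le> real (Suc n)"
      hence "x > 0" using n0 by linarith
      thus "((\<lambda>x. x powr (1-g)) has_real_derivative (1-g) * x powr (1-g-1)) (at x)"
        by (rule has_real_derivative_powr)
    qed
    then obtain z where z: "real n < z" "z < real (Suc n)"
      "real (Suc n) powr (1-g) - real n powr (1-g) = (real (Suc n) - real n) * ((1-g) * z powr (1-g-1))" by blast
    have "real (Suc n) - real n = 1" by simp
    moreover have "1 - g - 1 = -g" by simp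
    ultimately have z3: "real (Suc n) powr (1-g) - real n powr (1-g) = (1-g) * z powr (-g)" using z(3) by simp
    have "z powr (-g) \<ge> real (Suc n) powr (-g)" using z n0 g by (intro powr_mono2') (auto simp: less_imp_le)
    hence "(1-g) * real (Suc n) powr (-g) \<le> (1-g) * z powr (-g)"
      using bpos by (intro mult_left_mono) auto
    hence "(1-g) * real (Suc n) powr (-g) \<le> real (Suc n) powr (1-g) - real n powr (1-g)"
      using z3 by linarith
    hence "real (Suc n) powr (-g) \<le> (real (Suc n) powr (1-g) - real n powr (1-g)) / (1-g)"
      using bpos by (simp add: pos_le_divide_eq mult.commute)
    thus ?thesis by (simp add: diff_divide_distrib)
  qed
  have "(\<Sum>j=1..Suc n. real j powr (-g)) = (\<Sum>j=1..n. real j powr (-g)) + real (Suc n) powr (-g)"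
    by simp
  also have "\<dots> \<le> real n powr (1-g) / (1-g) + real (Suc n) powr (-g)" using Suc.IH by simp
  also have "\<dots> \<le> real (Suc n) powr (1-g) / (1-g)" by (rule step)
  finally show ?case .
qed

lemma clique_rest: "has_clique W (rest E W) r \<Longrightarrow> W \<subseteq> V \<Longrightarrow> has_clique V E r"
  unfolding has_clique_def rest_def by blast


lemma L_P:
  fixes n \<beta> :: real assumes n: "n \<ge> 16" and b: "1/2 \<le> \<beta>" "\<beta> \<le> 1"
  shows "sqrt (sqrt n) \<le> 2 * (n / ln n) powr \<beta>" "1 \<le> (n / ln n) powr \<beta>"
proof -
  have n1: "n > 1" using n by simp
  have sn: "sqrt n \<ge> 4" using n real_sqrt_le_mono[OF n] by simp
  have q: "n / ln n \<ge> sqrt n / 2" using t_over_ln[OF n1] .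
  have "sqrt n / 2 \<ge> 2" using sn by simp
  hence q1: "n / ln n \<ge> 1" using q by linarith
  show "1 \<le> (n / ln n) powr \<beta>" using q1 b by (intro ge_one_powr_ge_zero) auto
  have "(n / ln n) powr (1/2) \<le> (n / ln n) powr \<beta>" using q1 b by (intro powr_mono) auto
  moreover have "(sqrt n / 2) powr (1/2) \<le> (n / ln n) powr (1/2)" using q sn n by (intro powr_mono2) auto
  moreover have "(sqrt n / 2) powr (1/2) = sqrt (sqrt n) / sqrt 2"
  proof -
    have "(sqrt n / 2) powr (1/2) = sqrt (sqrt n / 2)" using sn n by (intro powr_half_sqrt) auto
    thus ?thesis by (simp add: real_sqrt_divide)
  qed
  moreover have "sqrt (sqrt n) / 2 \<le> sqrt (sqrt n) / sqrt 2"
  proof -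
    have "sqrt 2 \<le> (2::real)" by (rule real_le_lsqrt) auto
    moreover have "sqrt 2 > (0::real)" by simp
    ultimately show ?thesis using n by (intro divide_left_mono) auto
  qed
  ultimately show "sqrt (sqrt n) \<le> 2 * (n / ln n) powr \<beta>" by linarith
qed

lemma L_Q:
  fixes n \<beta> c :: real assumes n: "n \<ge> 16" and b: "1/2 \<le> \<beta>" "\<beta> \<le> 1" and c: "c > 0"
  shows "n powr \<beta> / (\<beta> * c * ((ln n / 4) powr \<beta>)) \<le> (8 / c) * (n / ln n) powr \<beta>"
proof -
  have n1: "n > 1" using n by simp
  have L: "ln n > 0" using n1 by simp
  have lam: "(ln n / 4) powr \<beta> = ln n powr \<beta> / 4 powr \<beta>" by (rule powr_divide)
  have f4: "4 powr \<beta> \<le> 4" using powr_mono[of \<beta> 1 4] b by simp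
  have f4p: "4 powr \<beta> > 0" by simp
  have Lb: "ln n powr \<beta> > 0" using L by simp
  have nb: "n powr \<beta> \<ge> 0" by simp
  have "n powr \<beta> / (\<beta> * c * ((ln n / 4) powr \<beta>)) = (n powr \<beta> / ln n powr \<beta>) * (4 powr \<beta> / (\<beta> * c))"
    unfolding lam using b c f4p Lb by (simp add: field_simps)
  also have "\<dots> \<le> (n powr \<beta> / ln n powr \<beta>) * (8 / c)"
  proof (rule mult_left_mono)
    have "4 powr \<beta> / (\<beta> * c) \<le> 4 / (\<beta> * c)" using f4 b c by (intro divide_right_mono) auto
    also have "4 / (\<beta> * c) \<le> 4 / ((1/2) * c)" using b c by (intro divide_left_mono) auto
    also have "\<dots> = 8 / c" by simp
    finally show "4 powr \<beta> / (\<beta> * c) \<le> 8 / c" .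
  qed (use nb Lb in simp)
  also have "n powr \<beta> / ln n powr \<beta> = (n / ln n) powr \<beta>" using L n1 by (simp add: powr_divide)
  finally show ?thesis by (simp add: mult.commute)
qed


theorem mainTheorem9:
  fixes r :: nat
  assumes "r \<ge> 3"
  shows "\<exists>C::real. \<exists>N::nat. \<forall>V E. simple_graph V E \<longrightarrow> Kr_free V E r \<longrightarrow> card V \<ge> N \<longrightarrow>
           real (chromatic_number V E)
             \<le> C * (real (card V) / ln (real (card V))) powr ((real r - 2) / (real r - 1))"
proof -
  have r3: "r \<ge> 3" using assms .
  obtain C0 T where C0: "C0 \<ge> 1" and T: "T \<ge> 3" and RB: "RB r C0 T" using ramsey_all[of r] r3 by auto
  obtain c K0 where c: "c > 0" and AL: "\<forall>V E. simple_graph V E \<longrightarrow> \<not> has_clique V E r \<longrightarrow> real (card V) \<ge> K0 \<longrightarrow>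
    (\<exists>S. indep V E S \<and> real (card S) \<ge> c * real (card V) powr (1 / (real r - 1)) * ln (real (card V)) powr ((real r - 2) / (real r - 1)))"
    using alpha_lb[OF r3 RB C0 T] by blast
  define \<gamma> where "\<gamma> = 1 / (real r - 1)"
  define \<beta> where "\<beta> = (real r - 2) / (real r - 1)"
  have r2: "real r - 1 \<ge> 2" using r3 by simp
  have bg: "\<beta> = 1 - \<gamma>" using r2 by (simp add: \<beta>_def \<gamma>_def field_simps)
  have g0: "\<gamma> > 0" using r2 by (simp add: \<gamma>_def)
  have g2: "\<gamma> \<le> 1/2" using r2 by (simp add: \<gamma>_def field_simps)
  have b1: "1/2 \<le> \<beta>" "\<beta> \<le> 1" using bg g0 g2 by auto
  define K1 where "K1 = max K0 1"
  define N where "N = nat \<lceil>max 16 (K1^4)\<rceil>"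
  show ?thesis
  proof (rule exI[of _ "4 + 8 / c"], rule exI[of _ N], intro allI impI)
    fix V E assume sg: "simple_graph V E" and kf: "Kr_free V E r" and NV: "N \<le> card V"
    define n where "n = real (card V)"
    have nN: "n \<ge> max 16 (K1^4)" using NV unfolding n_def N_def by linarith
    have n16: "n \<ge> 16" using nN by simp
    have nK: "n \<ge> K1^4" using nN by simp
    define s4 where "s4 = sqrt (sqrt n)"
    have s4K: "s4 \<ge> K1" using sqrt2_ge_of_4[OF nK] by (simp add: s4_def K1_def)
    have s4pos: "s4 > 0" using n16 by (simp add: s4_def)
    define Ln where "Ln = ln n"
    have Ln: "Ln > 0" using n16 by (simp add: Ln_def)
    define lam where "lam = (Ln / 4) powr \<beta>"
    have lam: "lam > 0" using Ln by (simp add: lam_def)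
    define J0 where "J0 = nat \<lceil>s4\<rceil>"
    have J0s: "real J0 \<ge> s4" unfolding J0_def by linarith
    have J0s': "real J0 \<le> s4 + 1" unfolding J0_def using s4pos by linarith
    define f where "f = (\<lambda>j::nat. if j < J0 then 1 else max 1 (c * real j powr \<gamma> * lam))"
    have fpos: "\<And>j. 1 \<le> j \<Longrightarrow> f j > 0" by (simp add: f_def) (smt (verit))
    have fge1: "\<And>j. f j \<ge> 1" by (simp add: f_def)
    have fmono: "\<And>i j. 1 \<le> i \<Longrightarrow> i \<le> j \<Longrightarrow> f i \<le> f j"
    proof -
      fix i j :: nat assume i: "1 \<le> i" and ij: "i \<le> j"
      have "c * real i powr \<gamma> * lam \<le> c * real j powr \<gamma> * lam"
        using ij c lam g0 by (intro mult_right_mono mult_left_mono powr_mono2) auto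
      thus "f i \<le> f j" using ij by (auto simp: f_def)
    qed
    have ex: "\<And>W. W \<subseteq> V \<Longrightarrow> W \<noteq> {} \<Longrightarrow> \<exists>S. indep W (rest E W) S \<and> real (card S) \<ge> f (card W)"
    proof -
      fix W assume WV: "W \<subseteq> V" and Wne: "W \<noteq> {}"
      obtain w where w: "w \<in> W" using Wne by blast
      have single: "indep W (rest E W) {w}" using w sg unfolding indep_def rest_def simple_graph_def by auto
      show "\<exists>S. indep W (rest E W) S \<and> real (card S) \<ge> f (card W)"
      proof (cases "card W < J0")
        case True
        thus ?thesis using single by (intro exI[of _ "{w}"]) (simp add: f_def)
      next
        case False
        define j where "j = real (card W)"
        have jJ: "j \<ge> real J0" using False by (simp add: j_def)
        have js: "j \<ge> s4" using jJ J0s by linarith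
        have jK: "j \<ge> K0" using js s4K by (simp add: K1_def)
        have sgW: "simple_graph W (rest E W)" using sg_rest[OF sg WV] .
        have nclW: "\<not> has_clique W (rest E W) r" using kf clique_rest[OF _ WV] by (auto simp: Kr_free_def)
        obtain S where S: "indep W (rest E W) S"
          and Sc: "real (card S) \<ge> c * j powr \<gamma> * ln j powr \<beta>"
          using AL sgW nclW jK unfolding j_def \<gamma>_def \<beta>_def by blast
        have "ln j \<ge> ln s4" using js s4pos by simp
        moreover have "ln s4 = Ln / 4" using n16 by (simp add: s4_def Ln_def ln_sqrt)
        ultimately have "Ln / 4 \<le> ln j" by simp
        hence "lam \<le> ln j powr \<beta>" unfolding lam_def using Ln b1 by (intro powr_mono2) auto
        hence "c * j powr \<gamma> * lam \<le> c * j powr \<gamma> * ln j powr \<beta>" using c by (intro mult_left_mono) auto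
        hence X: "c * j powr \<gamma> * lam \<le> real (card S)" using Sc by linarith
        show ?thesis
        proof (cases "c * j powr \<gamma> * lam \<le> 1")
          case True
          thus ?thesis using single False by (intro exI[of _ "{w}"]) (simp add: f_def j_def)
        next
          case False2: False
          thus ?thesis using S X False by (intro exI[of _ S]) (simp add: f_def j_def)
        qed
      qed
    qed
    obtain k where k: "colorable V E k" and kle: "real k \<le> (\<Sum>j=1..card V. 1 / f j)"
      using greedy_color[OF fmono fpos ex sg_fin[OF sg], of V] by blast
    have termb: "\<And>j. j \<in> {1..card V} \<Longrightarrow> 1 / f j \<le> (if j < J0 then 1 else 0) + (1 / (c * lam)) * real j powr (-\<gamma>)"
    proof -
      fix j assume j: "j \<in> {1..card V}"
      have jp: "real j > 0" using j by simp
      have nn: "(1 / (c * lam)) * real j powr (-\<gamma>) \<ge> 0" using c lam by simp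
      show "1 / f j \<le> (if j < J0 then 1 else 0) + (1 / (c * lam)) * real j powr (-\<gamma>)"
      proof (cases "j < J0")
        case True thus ?thesis using nn by (simp add: f_def)
      next
        case False
        define X where "X = c * real j powr \<gamma> * lam"
        have Xp: "X > 0" using c lam jp by (simp add: X_def)
        have "1 / f j = 1 / max 1 X" using False by (simp add: f_def X_def)
        also have "\<dots> \<le> 1 / X" using Xp by (intro divide_left_mono) auto
        also have "1 / X = (1 / (c * lam)) * real j powr (-\<gamma>)"
          using jp c lam by (simp add: X_def powr_minus field_simps)
        finally show ?thesis using False by simp
      qed
    qed
    have "(\<Sum>j=1..card V. 1 / f j) \<le> (\<Sum>j=1..card V. (if j < J0 then 1 else 0) + (1 / (c * lam)) * real j powr (-\<gamma>))"
      by (rule sum_mono) (rule termb)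
    also have "\<dots> = (\<Sum>j=1..card V. (if j < J0 then 1 else 0)) + (1 / (c * lam)) * (\<Sum>j=1..card V. real j powr (-\<gamma>))"
      by (simp add: sum.distrib sum_distrib_left)
    finally have s1: "(\<Sum>j=1..card V. 1 / f j) \<le> (\<Sum>j=1..card V. (if j < J0 then 1 else 0)) + (1 / (c * lam)) * (\<Sum>j=1..card V. real j powr (-\<gamma>))" .
    have s2: "(\<Sum>j=1..card V. (if j < J0 then 1 else 0)) \<le> real J0"
    proof -
      have "(\<Sum>j=1..card V. (if j < J0 then 1 else 0)) = real (card {j \<in> {1..card V}. j < J0})"
        by (simp add: sum.inter_filter[symmetric])
      moreover have "card {j \<in> {1..card V}. j < J0} \<le> card {..<J0}" by (intro card_mono) auto
      hence "real (card {j \<in> {1..card V}. j < J0}) \<le> real J0" by simp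
      ultimately show ?thesis by linarith
    qed
    have s3: "(\<Sum>j=1..card V. real j powr (-\<gamma>)) \<le> n powr \<beta> / \<beta>"
      using sum_powr_bound[of \<gamma> "card V"] g0 g2 bg by (simp add: n_def)
    have s4': "(1 / (c * lam)) * (\<Sum>j=1..card V. real j powr (-\<gamma>)) \<le> (1 / (c * lam)) * (n powr \<beta> / \<beta>)"
      using s3 c lam by (intro mult_left_mono) auto
    have "(\<Sum>j=1..card V. 1 / f j) \<le> real J0 + (1 / (c * lam)) * (n powr \<beta> / \<beta>)"
      using s1 s2 s4' by linarith
    moreover have "(1 / (c * lam)) * (n powr \<beta> / \<beta>) = n powr \<beta> / (\<beta> * c * ((ln n / 4) powr \<beta>))"
      unfolding lam_def Ln_def by simp
    moreover have "n powr \<beta> / (\<beta> * c * ((ln n / 4) powr \<beta>)) \<le> (8 / c) * (n / ln n) powr \<beta>"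
      using L_Q[OF n16 b1 c] .
    moreover have "real J0 \<le> 4 * (n / ln n) powr \<beta>"
      using L_P[OF n16 b1] J0s' by (simp add: s4_def)
    moreover have "(4 + 8 / c) * (n / ln n) powr \<beta> = 4 * (n / ln n) powr \<beta> + (8 / c) * (n / ln n) powr \<beta>"
      by (rule distrib_right)
    ultimately have "(\<Sum>j=1..card V. 1 / f j) \<le> (4 + 8 / c) * (n / ln n) powr \<beta>"
      by linarith
    moreover have "chromatic_number V E \<le> k" using chrom_le[OF k] .
    ultimately show "real (chromatic_number V E) \<le> (4 + 8 / c) * (real (card V) / ln (real (card V))) powr ((real r - 2) / (real r - 1))"
      using kle unfolding n_def \<beta>_def by linarith
  qed
qed

end
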